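(* For every finite simple digraph $G$, ${\sf dgw}(G) \leq {\sf circ}(G) + 1$, where ${\sf dgw}(G)$ is the DAG-width of $G$ and ${\sf circ}(G)$ is its circumference.
   Context: All digraphs are finite and simple (no loops, no multiple arcs). The circumference ${\sf circ}(G)$ of a digraph $G$ is the length (number of arcs) of a longest simple directed cycle in $G$; if $G$ is acyclic (a DAG), ${\sf circ}(G)$ is defined to be $1$. For a DAG $T$ and distinct nodes $i,j$, write $i\prec j$ if there is a directed walk in $T$ from $i$ to $j$, and $i\preceq j$ if $i=j$ or $i\prec j$; a root is a node with no incoming arcs. Given sets $X_i$ for nodes $i$, let $X_{\succeq j}=\bigcup_{k\succeq j}X_k$. For $W,X\subseteq V(G)$, $X$ guards $W$ if $W\cap X=\emptyset$ and for every arc $(u,v)$ of $G$ with $u\in W$ we have $v\in W\cup X$. A DAG-decomposition of $G$ is a pair $(T,(X_i)_{i\in V(T)})$ where $T$ is a DAG and each $X_i\subseteq V(G)$, such that: (1) $\bigcup_{i}X_i=V(G)$; (2) for all nodes $i,j,k$ of $T$ with $i\preceq j\preceq k$, $X_i\cap X_k\subseteq X_j$; (3) for every arc $(i,j)$ of $T$, $X_i\cap X_j$ guards $X_{\succeq j}\setminus X_i$, and for every root $r$ of $T$, $X_{\succeq r}$ is guarded by $\emptyset$. Its width is $\max_i |X_i|$, and the DAG-width ${\sf dgw}(G)$ is the minimum width of a DAG-decomposition of $G$. *)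

theory Defs
  imports Main
begin

text \<open>A finite simple digraph: finite vertex set V, arc relation E \<subseteq> V \<times> V, no loops.
  (Multiple arcs are impossible since E is a set of pairs.)\<close>
definition simple_digraph :: "'a set \<Rightarrow> ('a \<times> 'a) set \<Rightarrow> bool" where
  "simple_digraph V E \<longleftrightarrow> finite V \<and> E \<subseteq> V \<times> V \<and> (\<forall>v. (v, v) \<notin> E)"

text \<open>A simple directed cycle, given as the list of its distinct vertices
  v_0,...,v_{k-1} (k \<ge> 2) with arcs v_i \<rightarrow> v_{i+1 mod k}. Its length (number of arcs) is k.\<close>
definition is_dicycle :: "('a \<times> 'a) set \<Rightarrow> 'a list \<Rightarrow> bool" where
  "is_dicycle E cs \<longleftrightarrow> length cs \<ge> 2 \<and> distinct cs \<and>
     (\<forall>i < length cs. (cs ! i, cs ! (Suc i mod length cs)) \<in> E)"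

definition circ :: "'a set \<Rightarrow> ('a \<times> 'a) set \<Rightarrow> nat" where
  "circ V E = (if \<exists>cs. is_dicycle E cs then Max {length cs | cs. is_dicycle E cs} else 1)"

definition dprec :: "('b \<times> 'b) set \<Rightarrow> 'b \<Rightarrow> 'b \<Rightarrow> bool" where
  "dprec A i j \<longleftrightarrow> (i, j) \<in> A\<^sup>+"

definition dpreceq :: "('b \<times> 'b) set \<Rightarrow> 'b \<Rightarrow> 'b \<Rightarrow> bool" where
  "dpreceq A i j \<longleftrightarrow> i = j \<or> dprec A i j"

definition Xsucceq :: "'b set \<Rightarrow> ('b \<times> 'b) set \<Rightarrow> ('b \<Rightarrow> 'a set) \<Rightarrow> 'b \<Rightarrow> 'a set" where
  "Xsucceq N A X j = (\<Union>k \<in> {k \<in> N. dpreceq A j k}. X k)"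

definition guards :: "('a \<times> 'a) set \<Rightarrow> 'a set \<Rightarrow> 'a set \<Rightarrow> bool" where
  "guards E X W \<longleftrightarrow> W \<inter> X = {} \<and> (\<forall>u v. (u, v) \<in> E \<longrightarrow> u \<in> W \<longrightarrow> v \<in> W \<union> X)"

definition is_root :: "'b set \<Rightarrow> ('b \<times> 'b) set \<Rightarrow> 'b \<Rightarrow> bool" where
  "is_root N A r \<longleftrightarrow> r \<in> N \<and> (\<forall>i. (i, r) \<notin> A)"

definition dag_decomposition ::
  "'a set \<Rightarrow> ('a \<times> 'a) set \<Rightarrow> 'b set \<Rightarrow> ('b \<times> 'b) set \<Rightarrow> ('b \<Rightarrow> 'a set) \<Rightarrow> bool" where
  "dag_decomposition V E N A X \<longleftrightarrow>
     finite N \<and> A \<subseteq> N \<times> N \<and> acyclic A \<and>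
     (\<forall>i \<in> N. X i \<subseteq> V) \<and>
     (\<Union>i \<in> N. X i) = V \<and>
     (\<forall>i \<in> N. \<forall>j \<in> N. \<forall>k \<in> N. dpreceq A i j \<and> dpreceq A j k \<longrightarrow> X i \<inter> X k \<subseteq> X j) \<and>
     (\<forall>(i, j) \<in> A. guards E (X i \<inter> X j) (Xsucceq N A X j - X i)) \<and>
     (\<forall>r. is_root N A r \<longrightarrow> guards E {} (Xsucceq N A X r))"

definition dd_width :: "'b set \<Rightarrow> ('b \<Rightarrow> 'a set) \<Rightarrow> nat" where
  "dd_width N X = Max (insert 0 ((\<lambda>i. card (X i)) ` N))"

text \<open>DAG-width: minimum width of a DAG-decomposition. Nodes of T are taken from nat
  (every finite DAG is isomorphic to one on natural numbers).\<close>
definition dgw :: "'a set \<Rightarrow> ('a \<times> 'a) set \<Rightarrow> nat" where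
  "dgw V E = (LEAST k. \<exists>(N :: nat set) A X. dag_decomposition V E N A X \<and> dd_width N X = k)"

end

theory Submission
  imports Defs
begin


fun pth :: "('a \<times> 'a) set \<Rightarrow> 'a list \<Rightarrow> bool" where
  "pth E [] = True"
| "pth E [x] = True"
| "pth E (x # y # xs) = ((x, y) \<in> E \<and> pth E (y # xs))"

lemma pth_append:
  "pth E (xs @ ys) \<longleftrightarrow> pth E xs \<and> pth E ys \<and> (xs \<noteq> [] \<and> ys \<noteq> [] \<longrightarrow> (last xs, hd ys) \<in> E)"
proof (induction xs rule: pth.induct)
  case (1 E) then show ?case by simp
next
  case (2 E x) then show ?case by (cases ys) auto
next
  case (3 E x y xs) then show ?case by auto
qed

lemma pth_Cons: "pth E (x # xs) \<longleftrightarrow> pth E xs \<and> (xs \<noteq> [] \<longrightarrow> (x, hd xs) \<in> E)"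
  by (cases xs) auto

lemma pth_nth: "pth E xs \<Longrightarrow> Suc i < length xs \<Longrightarrow> (xs ! i, xs ! Suc i) \<in> E"
proof (induction xs arbitrary: i rule: pth.induct)
  case (3 E x y xs) then show ?case by (cases i) auto
qed auto

definition Ed :: "('a \<times> 'a) set \<Rightarrow> 'a set \<Rightarrow> ('a \<times> 'a) set" where
  "Ed E B = {(a, b). (a, b) \<in> E \<and> a \<notin> B \<and> b \<notin> B}"

lemma pth_rtrancl:
  "pth E xs \<Longrightarrow> xs \<noteq> [] \<Longrightarrow> set xs \<inter> B = {} \<Longrightarrow> (hd xs, last xs) \<in> (Ed E B)\<^sup>*"
proof (induction xs)
  case (Cons x xs)
  show ?case
  proof (cases xs)
    case Nil then show ?thesis by simp
  next
    case (Cons y ys)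
    have "(hd xs, last xs) \<in> (Ed E B)\<^sup>*" using Cons.IH Cons.prems Cons by (auto simp: pth_Cons)
    moreover have "(x, hd xs) \<in> Ed E B" using Cons.prems Cons by (auto simp: Ed_def)
    ultimately show ?thesis using Cons by (auto intro: converse_rtrancl_into_rtrancl)
  qed
qed auto

lemma rtrancl_pth:
  assumes "(a, b) \<in> (Ed E B)\<^sup>*" "a \<notin> B"
  shows "\<exists>xs. pth E xs \<and> xs \<noteq> [] \<and> hd xs = a \<and> last xs = b \<and> distinct xs \<and> set xs \<inter> B = {}"
  using assms(1)
proof (induction rule: rtrancl_induct)
  case base
  then show ?case using assms(2) by (intro exI[of _ "[a]"]) auto
next
  case (step y z)
  then obtain xs where xs: "pth E xs" "xs \<noteq> []" "hd xs = a" "last xs = y" "distinct xs" "set xs \<inter> B = {}"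
    by blast
  show ?case
  proof (cases "z \<in> set xs")
    case True
    then obtain p q where pq: "xs = p @ z # q" by (meson split_list)
    have "pth E (p @ [z])" using xs(1) pq pth_append[of E "p @ [z]" q] by auto
    moreover have "hd (p @ [z]) = a" using xs(3) pq by (cases p) auto
    ultimately show ?thesis using xs pq by (intro exI[of _ "p @ [z]"]) auto
  next
    case False
    have "(y, z) \<in> E" "z \<notin> B" using step(2) by (auto simp: Ed_def)
    then have "pth E (xs @ [z])" using xs pth_append[of E xs "[z]"] by auto
    then show ?thesis using xs False \<open>z \<notin> B\<close> by (intro exI[of _ "xs @ [z]"]) auto
  qed
qed

definition dfs_ok :: "'a set \<Rightarrow> ('a \<times> 'a) set \<Rightarrow> ('a \<Rightarrow> nat) \<Rightarrow> ('a \<Rightarrow> 'a list) \<Rightarrow> bool" where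
  "dfs_ok V E f ap \<longleftrightarrow> inj_on f V \<and>
    (\<forall>v\<in>V. set (ap v) \<subseteq> V \<and> distinct (ap v @ [v]) \<and> pth E (ap v @ [v])) \<and>
    (\<forall>v\<in>V. \<forall>i<length (ap v). ap (ap v ! i) = take i (ap v)) \<and>
    (\<forall>v\<in>V. \<forall>z\<in>set (ap v). f v < f z) \<and>
    (\<forall>w\<in>V. \<forall>y\<in>V. \<forall>z\<in>V. (y, z) \<in> E \<longrightarrow> f y \<le> f w \<longrightarrow> f w < f z \<longrightarrow> z \<in> set (ap w))"

definition Er :: "('a \<times> 'a) set \<Rightarrow> 'a set \<Rightarrow> ('a \<times> 'a) set" where
  "Er E B = E \<inter> B \<times> B"

lemma Er_rtrancl_in: "(a, b) \<in> (Er E V)\<^sup>* \<Longrightarrow> a \<in> V \<Longrightarrow> b \<in> V"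
  by (induction rule: rtrancl_induct) (auto simp: Er_def)

lemma Er_mono: "B \<subseteq> C \<Longrightarrow> (a, b) \<in> (Er E B)\<^sup>* \<Longrightarrow> (a, b) \<in> (Er E C)\<^sup>*"
  by (rule rtrancl_mono[THEN subsetD]) (auto simp: Er_def)

lemma reach_split:
  assumes "(s, x) \<in> (Er E V)\<^sup>*" "x \<noteq> s"
  shows "\<exists>n. n \<in> V \<and> n \<noteq> s \<and> (s, n) \<in> (Er E V)\<^sup>* \<and> (s, n) \<in> E \<and>
     (n, x) \<in> (Er E ({y. (s, y) \<in> (Er E V)\<^sup>*} - {s}))\<^sup>*"
  using assms
proof (induction rule: rtrancl_induct)
  case base then show ?case by simp
next
  case (step y z)
  show ?case
  proof (cases "y = s")
    case True
    then show ?thesis using step by (auto simp: Er_def)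
  next
    case False
    then obtain n where n: "n \<in> V" "n \<noteq> s" "(s, n) \<in> (Er E V)\<^sup>*" "(s, n) \<in> E"
      "(n, y) \<in> (Er E ({y. (s, y) \<in> (Er E V)\<^sup>*} - {s}))\<^sup>*" using step by blast
    have "(y, z) \<in> Er E ({y. (s, y) \<in> (Er E V)\<^sup>*} - {s})"
      using step False by (auto simp: Er_def intro: rtrancl_into_rtrancl)
    then show ?thesis using n by (meson rtrancl_into_rtrancl)
  qed
qed

lemma reach_out:
  assumes "(a, b) \<in> (Er E V)\<^sup>*" "b \<notin> R" "\<And>x y. x \<in> R \<Longrightarrow> (x, y) \<in> Er E V \<Longrightarrow> y \<in> R"
  shows "a \<notin> R \<and> (a, b) \<in> (Er E (V - R))\<^sup>*"
  using assms(1,2)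
proof (induction rule: converse_rtrancl_induct)
  case base then show ?case by simp
next
  case (step a c)
  then have "a \<notin> R" using assms(3) by blast
  then have "(a, c) \<in> Er E (V - R)" using step by (auto simp: Er_def)
  then show ?case using step \<open>a \<notin> R\<close> by (meson converse_rtrancl_into_rtrancl)
qed

lemma dfs_exists:
  "finite V \<Longrightarrow> S \<subseteq> V \<Longrightarrow> (\<forall>v\<in>V. \<exists>s\<in>S. (s, v) \<in> (Er E V)\<^sup>*) \<Longrightarrow>
   \<exists>f ap. dfs_ok V E f ap \<and> (\<forall>v\<in>V. hd (ap v @ [v]) \<in> S)"
proof (induction "card V" arbitrary: V S rule: less_induct)
  case less
  show ?case
  proof (cases "V = {}")
    case True
    then show ?thesis by (intro exI[of _ "\<lambda>_. 0::nat"] exI[of _ "\<lambda>_. []"]) (simp add: dfs_ok_def)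
  next
    case False
    then obtain v0 where "v0 \<in> V" by blast
    then obtain s where s: "s \<in> S" using less.prems(3) by blast
    have sV: "s \<in> V" using s less.prems(2) by blast
    define R where "R = {x. (s, x) \<in> (Er E V)\<^sup>*}"
    define V2 where "V2 = R - {s}"
    define S2 where "S2 = {n \<in> V2. (s, n) \<in> E}"
    define V1 where "V1 = V - R"
    define S1 where "S1 = S - R"
    have RV: "R \<subseteq> V" unfolding R_def using Er_rtrancl_in[OF _ sV] by blast
    have sR: "s \<in> R" unfolding R_def by simp
    have Rcl: "\<And>x y. x \<in> R \<Longrightarrow> (x, y) \<in> Er E V \<Longrightarrow> y \<in> R"
      unfolding R_def by (auto intro: rtrancl_into_rtrancl)
    have fin2: "finite V2" "finite V1" using less.prems(1) RV unfolding V2_def V1_def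
      by (auto intro: finite_subset)
    have c2: "card V2 < card V" using less.prems(1) RV sR unfolding V2_def
      by (intro psubset_card_mono) auto
    have c1: "card V1 < card V" using less.prems(1) RV sR unfolding V1_def
      by (intro psubset_card_mono) auto
    have r2: "\<forall>v\<in>V2. \<exists>n\<in>S2. (n, v) \<in> (Er E V2)\<^sup>*"
    proof
      fix x assume "x \<in> V2"
      then have "(s, x) \<in> (Er E V)\<^sup>*" "x \<noteq> s" unfolding V2_def R_def by auto
      from reach_split[OF this] obtain n where n: "n \<in> V" "n \<noteq> s" "(s, n) \<in> (Er E V)\<^sup>*" "(s, n) \<in> E"
        "(n, x) \<in> (Er E ({y. (s, y) \<in> (Er E V)\<^sup>*} - {s}))\<^sup>*" by blast
      have "n \<in> S2" using n(2,3,4) unfolding S2_def V2_def R_def by simp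
      moreover have "(n, x) \<in> (Er E V2)\<^sup>*" using n(5) unfolding V2_def R_def by simp
      ultimately show "\<exists>n\<in>S2. (n, x) \<in> (Er E V2)\<^sup>*" by blast
    qed
    have r1: "\<forall>v\<in>V1. \<exists>n\<in>S1. (n, v) \<in> (Er E V1)\<^sup>*"
    proof
      fix x assume x: "x \<in> V1"
      then obtain s0 where s0: "s0 \<in> S" "(s0, x) \<in> (Er E V)\<^sup>*" using less.prems(3) unfolding V1_def by blast
      have "x \<notin> R" using x unfolding V1_def by blast
      from reach_out[OF s0(2) this Rcl] have "s0 \<notin> R" "(s0, x) \<in> (Er E V1)\<^sup>*"
        unfolding V1_def by auto
      then show "\<exists>n\<in>S1. (n, x) \<in> (Er E V1)\<^sup>*" using s0(1) unfolding S1_def by blast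
    qed
    obtain f2 ap2 where h2: "dfs_ok V2 E f2 ap2" "\<forall>v\<in>V2. hd (ap2 v @ [v]) \<in> S2"
      using less.hyps[OF c2 fin2(1) _ r2] unfolding S2_def by blast
    obtain f1 ap1 where h1: "dfs_ok V1 E f1 ap1" "\<forall>v\<in>V1. hd (ap1 v @ [v]) \<in> S1"
      using less.hyps[OF c1 fin2(2) _ r1] less.prems(2) unfolding S1_def V1_def by blast
    define M where "M = Suc (Max (insert 0 (f2 ` V2)))"
    have f2M: "\<And>v. v \<in> V2 \<Longrightarrow> f2 v < M"
      unfolding M_def using fin2(1) by (simp add: le_imp_less_Suc)
    define f where "f v = (if v \<in> V2 then f2 v else if v = s then M else M + 1 + f1 v)" for v
    define ap where "ap v = (if v \<in> V2 then s # ap2 v else if v = s then [] else ap1 v)" for v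
    have Vsplit: "V = V2 \<union> {s} \<union> V1" using RV sR unfolding V2_def V1_def by auto
    have disj: "s \<notin> V2" "s \<notin> V1" "V2 \<inter> V1 = {}" using sR unfolding V2_def V1_def by auto
    note d2 = h2(1)[unfolded dfs_ok_def] and d1 = h1(1)[unfolded dfs_ok_def]
    have fR: "\<And>v. v \<in> R \<Longrightarrow> f v \<le> M" using f2M unfolding f_def V2_def
      by (auto simp: less_imp_le)
    have fV1: "\<And>v. v \<in> V1 \<Longrightarrow> f v > M" unfolding f_def using disj by auto
    have okA: "inj_on f V"
      proof (rule inj_onI)
        fix x y assume xy: "x \<in> V" "y \<in> V" "f x = f y"
        have reg: "\<And>v. v \<in> V \<Longrightarrow> (v \<in> V2 \<and> f v < M) \<or> (v = s \<and> f v = M) \<or> (v \<in> V1 \<and> v \<notin> V2 \<and> v \<noteq> s \<and> f v > M)"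
          using Vsplit f2M fV1 disj unfolding f_def by auto
        have i2: "inj_on f2 V2" and i1: "inj_on f1 V1" using d2 d1 by blast+
        from reg[OF xy(1)] reg[OF xy(2)] xy(3) show "x = y"
        proof (elim disjE conjE)
          assume "x \<in> V2" "y \<in> V2" then show "x = y" using xy(3) i2 unfolding f_def by (simp add: inj_on_def)
        next
          assume "x \<in> V1" "y \<in> V1" "x \<notin> V2" "y \<notin> V2" "x \<noteq> s" "y \<noteq> s"
          then show "x = y" using xy(3) i1 unfolding f_def by (simp add: inj_on_def)
        qed auto
      qed
    have okB: "\<forall>v\<in>V. set (ap v) \<subseteq> V \<and> distinct (ap v @ [v]) \<and> pth E (ap v @ [v])"
    proof
      fix v assume "v \<in> V"
      then consider "v \<in> V2" | "v = s" | "v \<in> V1" "v \<notin> V2" "v \<noteq> s" using Vsplit by blast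
      then show "set (ap v) \<subseteq> V \<and> distinct (ap v @ [v]) \<and> pth E (ap v @ [v])"
      proof cases
        case 1
        have "hd (ap2 v @ [v]) \<in> S2" using h2(2) 1 by blast
        then have "(s, hd (ap2 v @ [v])) \<in> E" unfolding S2_def by blast
        then show ?thesis using 1 d2 disj sV unfolding ap_def Vsplit
          by (auto simp: pth_Cons)
      next
        case 2 then show ?thesis using disj sV unfolding ap_def by auto
      next
        case 3 then show ?thesis using d1 unfolding ap_def Vsplit by auto
      qed
    qed
    have okC: "\<forall>v\<in>V. \<forall>i<length (ap v). ap (ap v ! i) = take i (ap v)"
    proof (intro ballI allI impI)
      fix v i assume v: "v \<in> V" and i: "i < length (ap v)"
      then consider "v \<in> V2" | "v \<in> V1" "v \<notin> V2" "v \<noteq> s" using Vsplit ap_def by fastforce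
      then show "ap (ap v ! i) = take i (ap v)"
      proof cases
        case 1
        show ?thesis
        proof (cases i)
          case 0 then show ?thesis using 1 disj unfolding ap_def by simp
        next
          case (Suc k)
          then have k: "k < length (ap2 v)" using i 1 unfolding ap_def by simp
          then have "ap2 v ! k \<in> V2" using d2 1 by (meson nth_mem subsetD)
          then show ?thesis using Suc 1 k d2 unfolding ap_def by simp
        qed
      next
        case 2
        then have i1: "i < length (ap1 v)" using i unfolding ap_def by simp
        then have "ap1 v ! i \<in> V1" using d1 2 by (meson nth_mem subsetD)
        then show ?thesis using 2 d1 i disj unfolding ap_def by auto
      qed
    qed
    have okD: "\<forall>v\<in>V. \<forall>z\<in>set (ap v). f v < f z"
    proof (intro ballI)
      fix v z assume v: "v \<in> V" and z: "z \<in> set (ap v)"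
      then consider "v \<in> V2" | "v \<in> V1" "v \<notin> V2" "v \<noteq> s" using Vsplit ap_def by fastforce
      then show "f v < f z"
      proof cases
        case 1
        then have "z = s \<or> z \<in> set (ap2 v)" using z unfolding ap_def by auto
        then show ?thesis using 1 d2 f2M disj unfolding f_def by auto
      next
        case 2
        then have "z \<in> set (ap1 v)" "z \<in> V1" using z d1 unfolding ap_def by auto
        then show ?thesis using 2 d1 disj unfolding f_def by auto
      qed
    qed
    have okF: "\<forall>w\<in>V. \<forall>y\<in>V. \<forall>z\<in>V. (y, z) \<in> E \<longrightarrow> f y \<le> f w \<longrightarrow> f w < f z \<longrightarrow> z \<in> set (ap w)"
    proof (intro ballI impI)
      fix w y z assume w: "w \<in> V" and y: "y \<in> V" and z: "z \<in> V" and e: "(y, z) \<in> E"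
        and le: "f y \<le> f w" and lt: "f w < f z"
      have eV: "(y, z) \<in> Er E V" using y z e by (simp add: Er_def)
      have RR: "y \<in> R \<Longrightarrow> z \<in> R" using Rcl eV by blast
      consider "w \<in> V2" | "w = s" | "w \<in> V1" "w \<notin> V2" "w \<noteq> s" using w Vsplit by blast
      then show "z \<in> set (ap w)"
      proof cases
        case 1
        have "f w < M" using 1 f2M unfolding f_def by simp
        then have "y \<in> V2" using le y fV1 unfolding Vsplit f_def by (auto split: if_splits)
        then have zR: "z \<in> R" using RR unfolding V2_def by blast
        show ?thesis
        proof (cases "z = s")
          case True then show ?thesis using 1 unfolding ap_def by simp
        next
          case False
          then have "z \<in> V2" using zR unfolding V2_def by blast
          then have "z \<in> set (ap2 w)" using d2 1 \<open>y \<in> V2\<close> e le lt unfolding f_def by auto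
          then show ?thesis using 1 unfolding ap_def by simp
        qed
      next
        case 2
        then have "f w = M" using disj unfolding f_def by simp
        then have "y \<in> R" using le y fV1 unfolding V1_def by fastforce
        then have "z \<in> R" using RR by blast
        then show ?thesis using fR lt \<open>f w = M\<close> by fastforce
      next
        case 3
        then have fw: "f w > M" using fV1 by blast
        have "z \<notin> R" using fR lt fw by fastforce
        then have "y \<notin> R" using RR by blast
        then have "y \<in> V1" "z \<in> V1" using y z \<open>z \<notin> R\<close> unfolding V1_def by auto
        moreover have "y \<notin> V2" "z \<notin> V2" "y \<noteq> s" "z \<noteq> s"
          using \<open>y \<notin> R\<close> \<open>z \<notin> R\<close> sR unfolding V2_def by auto
        moreover have "f1 y \<le> f1 w" "f1 w < f1 z" using calculation le lt 3 unfolding f_def by auto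
        ultimately have "z \<in> set (ap1 w)" using d1 3 e by blast
        then show ?thesis using 3 unfolding ap_def by simp
      qed
    qed
    have ok: "dfs_ok V E f ap" unfolding dfs_ok_def
      by (intro conjI) (fact okA, fact okB, fact okC, fact okD, fact okF)
    have "\<forall>v\<in>V. hd (ap v @ [v]) \<in> S"
    proof
      fix v assume "v \<in> V"
      then consider "v \<in> V2" | "v = s" | "v \<in> V1" "v \<notin> V2" "v \<noteq> s" using Vsplit by blast
      then show "hd (ap v @ [v]) \<in> S"
        by cases (use s h1(2) disj in \<open>auto simp: ap_def S1_def\<close>)
    qed
    with ok show ?thesis by blast
  qed
qed



lemma pth_cycle:
  assumes "pth E cs" "distinct cs" "length cs \<ge> 2" "(last cs, hd cs) \<in> E"
  shows "is_dicycle E cs"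
  unfolding is_dicycle_def
proof (intro conjI allI impI)
  fix i assume i: "i < length cs"
  show "(cs ! i, cs ! (Suc i mod length cs)) \<in> E"
  proof (cases "Suc i < length cs")
    case True then show ?thesis using pth_nth[OF assms(1) True] by simp
  next
    case False
    then have "Suc i = length cs" using i by simp
    have ne: "cs \<noteq> []" using assms(3) by auto
    have "i = length cs - 1" using \<open>Suc i = length cs\<close> by simp
    then have "cs ! i = last cs" "cs ! (Suc i mod length cs) = hd cs"
      using \<open>Suc i = length cs\<close> by (simp_all add: last_conv_nth[OF ne] hd_conv_nth[OF ne])
    then show ?thesis using assms(4) by simp
  qed
qed (use assms in auto)

lemma dicycle_V:
  assumes "E \<subseteq> V \<times> V" "is_dicycle E cs"
  shows "set cs \<subseteq> V"
proof
  fix x assume "x \<in> set cs"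
  then obtain i where i: "i < length cs" "x = cs ! i" by (metis in_set_conv_nth)
  then have "(cs ! i, cs ! (Suc i mod length cs)) \<in> E" using assms(2) unfolding is_dicycle_def by blast
  then show "x \<in> V" using assms(1) i by blast
qed

lemma circ_fin:
  assumes "finite V" "E \<subseteq> V \<times> V"
  shows "finite {length cs | cs. is_dicycle E cs}"
proof (rule finite_subset)
  show "{length cs | cs. is_dicycle E cs} \<subseteq> {..card V}"
  proof
    fix n assume "n \<in> {length cs | cs. is_dicycle E cs}"
    then obtain cs where cs: "n = length cs" "is_dicycle E cs" by blast
    have "length cs = card (set cs)" using cs(2) distinct_card unfolding is_dicycle_def by metis
    also have "\<dots> \<le> card V" using dicycle_V[OF assms(2) cs(2)] assms(1) by (simp add: card_mono)
    finally show "n \<in> {..card V}" using cs by simp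
  qed
qed simp

lemma circ_ge:
  assumes "finite V" "E \<subseteq> V \<times> V" "is_dicycle E cs"
  shows "length cs \<le> circ V E"
proof -
  have "circ V E = Max {length cs | cs. is_dicycle E cs}" using assms(3) unfolding circ_def by auto
  then show ?thesis using circ_fin[OF assms(1,2)] assms(3) by (auto intro: Max_ge)
qed

lemma circ_ge1:
  assumes "finite V" "E \<subseteq> V \<times> V"
  shows "1 \<le> circ V E"
proof (cases "\<exists>cs. is_dicycle E cs")
  case True
  then obtain cs where "is_dicycle E cs" by blast
  then have "2 \<le> length cs" "length cs \<le> circ V E" using circ_ge[OF assms] unfolding is_dicycle_def by auto
  then show ?thesis by simp
next
  case False then show ?thesis unfolding circ_def by auto
qed

locale dg =
  fixes V :: "'a set" and E :: "('a \<times> 'a) set" and f :: "'a \<Rightarrow> nat" and ap :: "'a \<Rightarrow> 'a list"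
  assumes fin: "finite V" and EV: "E \<subseteq> V \<times> V" and ok: "dfs_ok V E f ap"
begin

lemmas okd = ok[unfolded dfs_ok_def]

definition D where "D v = {x. (v, x) \<in> (Ed E (set (ap v)))\<^sup>*}"
definition Nb where "Nb v = {z. \<exists>y\<in>D v. (y, z) \<in> E \<and> z \<notin> D v}"
definition Xb where "Xb v = insert v (Nb v)"
definition TA where "TA = {(v, w). v \<in> V \<and> w \<in> D v \<and> w \<noteq> v \<and> Nb w \<subseteq> insert v (Nb v)}"

lemma D_self: "v \<in> D v" unfolding D_def by simp

lemma D_V: "v \<in> V \<Longrightarrow> D v \<subseteq> V"
proof
  fix x assume v: "v \<in> V" and "x \<in> D v"
  then have "(v, x) \<in> (Ed E (set (ap v)))\<^sup>*" unfolding D_def by simp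
  then show "x \<in> V" by (induction rule: rtrancl_induct) (use v EV in \<open>auto simp: Ed_def\<close>)
qed

lemma D_notanc: "v \<in> V \<Longrightarrow> x \<in> D v \<Longrightarrow> x \<notin> set (ap v)"
proof -
  assume v: "v \<in> V" and "x \<in> D v"
  then have "(v, x) \<in> (Ed E (set (ap v)))\<^sup>*" unfolding D_def by simp
  then show "x \<notin> set (ap v)"
  proof (induction rule: rtrancl_induct)
    case base then show ?case using okd v by auto
  qed (auto simp: Ed_def)
qed

lemma out_D: "y \<in> D v \<Longrightarrow> (y, z) \<in> E \<Longrightarrow> z \<in> D v \<or> z \<in> Nb v"
  unfolding Nb_def by blast

lemma Nb_anc: "v \<in> V \<Longrightarrow> Nb v \<subseteq> set (ap v)"
proof
  fix z assume v: "v \<in> V" and "z \<in> Nb v"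
  then obtain y where y: "y \<in> D v" "(y, z) \<in> E" "z \<notin> D v" unfolding Nb_def by blast
  show "z \<in> set (ap v)"
  proof (rule ccontr)
    assume "z \<notin> set (ap v)"
    then have "(y, z) \<in> Ed E (set (ap v))" using y D_notanc[OF v y(1)] by (simp add: Ed_def)
    then have "z \<in> D v" using y(1) unfolding D_def by (auto intro: rtrancl_into_rtrancl)
    then show False using y by blast
  qed
qed

lemma Nb_V: "Nb v \<subseteq> V" using EV unfolding Nb_def by blast

lemma Nb_notD: "z \<in> Nb v \<Longrightarrow> z \<notin> D v" unfolding Nb_def by blast

lemma D_f: "v \<in> V \<Longrightarrow> x \<in> D v \<Longrightarrow> f x \<le> f v"
proof -
  assume v: "v \<in> V" and "x \<in> D v"
  then have "(v, x) \<in> (Ed E (set (ap v)))\<^sup>*" unfolding D_def by simp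
  then show "f x \<le> f v"
  proof (induction rule: rtrancl_induct)
    case base then show ?case by simp
  next
    case (step a b)
    then have ab: "(a, b) \<in> E" "b \<notin> set (ap v)" by (auto simp: Ed_def)
    then have "a \<in> V" "b \<in> V" using EV by auto
    show ?case
    proof (rule ccontr)
      assume "\<not> f b \<le> f v"
      then have "b \<in> set (ap v)" using okd v \<open>a \<in> V\<close> \<open>b \<in> V\<close> ab(1) step(3) by auto
      then show False using ab by blast
    qed
  qed
qed

lemma K:
  assumes v: "v \<in> V" and w: "w \<in> D v" "w \<noteq> v"
  shows "D w \<subseteq> D v" "v \<notin> D w"
proof -
  have wV: "w \<in> V" using D_V[OF v] w by blast
  have "f w \<le> f v" using D_f[OF v w(1)] .
  moreover have "f w \<noteq> f v" using okd v wV w(2) by (meson inj_on_def)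
  ultimately have lt: "f w < f v" by simp
  show "v \<notin> D w" using D_f[OF wV] lt by fastforce
  show "D w \<subseteq> D v"
  proof
    fix x assume "x \<in> D w"
    then have "(w, x) \<in> (Ed E (set (ap w)))\<^sup>*" unfolding D_def by simp
    then have "(v, x) \<in> (Ed E (set (ap v)))\<^sup>*"
    proof (induction rule: rtrancl_induct)
      case base then show ?case using w unfolding D_def by simp
    next
      case (step a b)
      have "a \<in> D w" "b \<in> D w" using step(1,2) unfolding D_def by (auto intro: rtrancl_into_rtrancl)
      then have "f a < f v" "f b < f v" using D_f[OF wV] lt by fastforce+
      then have "a \<notin> set (ap v)" "b \<notin> set (ap v)" using okd v by fastforce+
      then have "(a, b) \<in> Ed E (set (ap v))" using step(2) by (auto simp: Ed_def)
      then show ?case using step(3) by (meson rtrancl_into_rtrancl)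
    qed
    then show "x \<in> D v" unfolding D_def by simp
  qed
qed

lemma TP:
  assumes x: "x \<in> V" and u: "u \<in> set (ap x)"
  shows "x \<in> D u"
proof -
  obtain j where j: "j < length (ap x)" "u = ap x ! j" using u by (metis in_set_conv_nth)
  have apu: "ap u = take j (ap x)" using okd x j by auto
  have d: "distinct (take j (ap x) @ (drop j (ap x) @ [x]))" using okd x by (simp add: append_assoc[symmetric])
  have p: "pth E (take j (ap x) @ (drop j (ap x) @ [x]))" using okd x by (simp add: append_assoc[symmetric])
  then have p2: "pth E (drop j (ap x) @ [x])" using pth_append by blast
  have "set (drop j (ap x) @ [x]) \<inter> set (ap u) = {}" using d apu by auto
  from pth_rtrancl[OF p2 _ this] have "(hd (drop j (ap x) @ [x]), x) \<in> (Ed E (set (ap u)))\<^sup>*" by simp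
  moreover have "hd (drop j (ap x) @ [x]) = u" using j by (simp add: hd_drop_conv_nth)
  ultimately show ?thesis unfolding D_def by simp
qed

lemma finD: "v \<in> V \<Longrightarrow> finite (D v)" using D_V fin finite_subset by blast

lemma inner:
  assumes v: "v \<in> V"
  shows "x \<in> D v \<Longrightarrow> x \<noteq> v \<Longrightarrow> \<exists>w. (v, w) \<in> TA \<and> x \<in> D w"
proof (induction "card (D v) - card (D x)" arbitrary: x rule: less_induct)
  case less
  have xV: "x \<in> V" using less.prems D_V v by blast
  show ?case
  proof (cases "Nb x \<subseteq> insert v (Nb v)")
    case True
    then show ?thesis using less.prems v D_self unfolding TA_def by blast
  next
    case False
    then obtain u where u: "u \<in> Nb x" "u \<noteq> v" "u \<notin> Nb v" by blast
    obtain y where y: "y \<in> D x" "(y, u) \<in> E" using u(1) unfolding Nb_def by blast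
    have "y \<in> D v" using y(1) K(1)[OF v less.prems] by blast
    then have uD: "u \<in> D v" using out_D y(2) u(3) by blast
    have uV: "u \<in> V" using uD D_V v by blast
    have ua: "u \<in> set (ap x)" using Nb_anc[OF xV] u(1) by blast
    have xu: "x \<in> D u" using TP[OF xV ua] .
    have "u \<notin> D x" using u(1) Nb_notD by blast
    then have "x \<noteq> u" using D_self by blast
    have Ks: "D x \<subseteq> D u" using K(1)[OF uV xu \<open>x \<noteq> u\<close>] .
    have "D x \<subset> D u" using Ks \<open>u \<notin> D x\<close> D_self by blast
    then have c1: "card (D x) < card (D u)" using finD[OF uV] psubset_card_mono by blast
    have "D u \<subseteq> D v" using K(1)[OF v uD u(2)] .
    then have "card (D u) \<le> card (D v)" using finD[OF v] card_mono by blast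
    then have "card (D v) - card (D u) < card (D v) - card (D x)" using c1 by simp
    from less.hyps[OF this uD u(2)] obtain w where w: "(v, w) \<in> TA" "u \<in> D w" by blast
    have wV: "w \<in> V" using w(1) D_V v unfolding TA_def by blast
    have "x \<in> D w"
    proof (cases "u = w")
      case True then show ?thesis using xu by simp
    next
      case False then show ?thesis using K(1)[OF wV w(2)] xu by blast
    qed
    then show ?thesis using w by blast
  qed
qed

lemma cover:
  "v \<in> V \<Longrightarrow> x \<in> D v \<Longrightarrow> x \<noteq> v \<Longrightarrow> (v, x) \<in> TA\<^sup>+"
proof (induction "card (D v)" arbitrary: v x rule: less_induct)
  case less
  obtain w where w: "(v, w) \<in> TA" "x \<in> D w" using inner less.prems by blast
  have wD: "w \<in> D v" "w \<noteq> v" using w(1) unfolding TA_def by auto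
  have wV: "w \<in> V" using wD D_V less.prems by blast
  show ?case
  proof (cases "x = w")
    case True then show ?thesis using w by blast
  next
    case False
    have "D w \<subset> D v" using K[OF less.prems(1) wD] D_self by blast
    then have "card (D w) < card (D v)" using finD[OF less.prems(1)] psubset_card_mono by blast
    from less.hyps[OF this wV w(2) False] show ?thesis using w(1) by simp
  qed
qed

lemma TA_trancl: "(v, w) \<in> TA\<^sup>+ \<longleftrightarrow> v \<in> V \<and> w \<in> D v \<and> w \<noteq> v"
proof
  assume "(v, w) \<in> TA\<^sup>+"
  then show "v \<in> V \<and> w \<in> D v \<and> w \<noteq> v"
  proof (induction rule: trancl_induct)
    case (base y) then show ?case unfolding TA_def by auto
  next
    case (step y z)
    then have "y \<in> V" "z \<in> D y" "z \<noteq> y" unfolding TA_def by auto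
    then show ?case using step K[of v y] by auto
  qed
next
  assume "v \<in> V \<and> w \<in> D v \<and> w \<noteq> v"
  then show "(v, w) \<in> TA\<^sup>+" using cover by blast
qed

lemma dpreceq_D: "v \<in> V \<Longrightarrow> dpreceq TA v w \<longleftrightarrow> w \<in> D v"
  unfolding dpreceq_def dprec_def TA_trancl using D_self by auto

lemma Xsucc: "j \<in> V \<Longrightarrow> Xsucceq V TA Xb j = D j \<union> Nb j"
proof -
  assume j: "j \<in> V"
  have "{k \<in> V. dpreceq TA j k} = D j" using dpreceq_D[OF j] D_V[OF j] by auto
  then have "Xsucceq V TA Xb j = (\<Union>k\<in>D j. Xb k)" unfolding Xsucceq_def by simp
  also have "\<dots> = D j \<union> Nb j"
  proof
    show "(\<Union>k\<in>D j. Xb k) \<subseteq> D j \<union> Nb j"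
    proof
      fix z assume "z \<in> (\<Union>k\<in>D j. Xb k)"
      then obtain k where k: "k \<in> D j" "z \<in> Xb k" by blast
      show "z \<in> D j \<union> Nb j"
      proof (cases "z = k")
        case True then show ?thesis using k by simp
      next
        case False
        then have "z \<in> Nb k" using k unfolding Xb_def by simp
        then obtain y where y: "y \<in> D k" "(y, z) \<in> E" unfolding Nb_def by blast
        have "D k \<subseteq> D j" using K(1)[OF j k(1)] by (cases "k = j") auto
        then show ?thesis using out_D y by blast
      qed
    qed
  next
    show "D j \<union> Nb j \<subseteq> (\<Union>k\<in>D j. Xb k)" using D_self unfolding Xb_def by blast
  qed
  finally show ?thesis .
qed

lemma root_Nb: assumes "is_root V TA r" shows "Nb r = {}"
proof (rule ccontr)
  assume "Nb r \<noteq> {}"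
  then obtain u where u: "u \<in> Nb r" by blast
  have rV: "r \<in> V" using assms unfolding is_root_def by simp
  have ua: "u \<in> set (ap r)" using Nb_anc[OF rV] u by blast
  have uV: "u \<in> V" using okd rV ua by blast
  have "r \<in> D u" using TP[OF rV ua] .
  moreover have "r \<noteq> u" using u Nb_notD D_self by blast
  ultimately have "(u, r) \<in> TA\<^sup>+" using cover uV by blast
  then obtain i where "(i, r) \<in> TA" by (meson tranclE)
  then show False using assms unfolding is_root_def by blast
qed

lemma decomp: "dag_decomposition V E V TA Xb"
  unfolding dag_decomposition_def
proof (intro conjI)
  show "finite V" by (rule fin)
  show "TA \<subseteq> V \<times> V" unfolding TA_def using D_V by blast
  show "acyclic TA" unfolding acyclic_def using TA_trancl by blast
  show "\<forall>i\<in>V. Xb i \<subseteq> V" unfolding Xb_def using Nb_V by blast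
  show "(\<Union>i\<in>V. Xb i) = V" unfolding Xb_def using Nb_V by blast
  show "\<forall>i\<in>V. \<forall>j\<in>V. \<forall>k\<in>V. dpreceq TA i j \<and> dpreceq TA j k \<longrightarrow> Xb i \<inter> Xb k \<subseteq> Xb j"
  proof (intro ballI impI subsetI)
    fix i j k x assume V3: "i \<in> V" "j \<in> V" "k \<in> V"
      and pr: "dpreceq TA i j \<and> dpreceq TA j k" and x: "x \<in> Xb i \<inter> Xb k"
    have ij: "j \<in> D i" and jk: "k \<in> D j" using pr dpreceq_D V3 by auto
    show "x \<in> Xb j"
    proof (cases "i = j \<or> j = k")
      case True then show ?thesis using x by auto
    next
      case False
      then have ne: "i \<noteq> j" "j \<noteq> k" by auto
      have Dji: "D j \<subseteq> D i" "i \<notin> D j" using K[OF V3(1) ij] ne by auto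
      have Dkj: "D k \<subseteq> D j" using K[OF V3(2) jk] ne by auto
      have ki: "k \<noteq> i" using Dji(2) jk by blast
      have kDi: "k \<in> D i" using Dji jk by blast
      have ik: "i \<notin> D k" using K[OF V3(1) kDi ki] by blast
      show ?thesis
      proof (cases "x = i")
        case True
        then have "i \<in> Nb k" using x ki unfolding Xb_def by auto
        then obtain y where y: "y \<in> D k" "(y, i) \<in> E" unfolding Nb_def by blast
        then have "i \<in> Nb j" using Dkj Dji(2) unfolding Nb_def by blast
        then show ?thesis using True unfolding Xb_def by simp
      next
        case False
        then have xi: "x \<in> Nb i" using x unfolding Xb_def by simp
        then have xnD: "x \<notin> D i" using Nb_notD by blast
        then have "x \<noteq> k" using kDi by blast
        then have "x \<in> Nb k" using x unfolding Xb_def by simp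
        then obtain y where y: "y \<in> D k" "(y, x) \<in> E" unfolding Nb_def by blast
        then have "x \<in> Nb j" using Dkj Dji(1) xnD unfolding Nb_def by blast
        then show ?thesis unfolding Xb_def by simp
      qed
    qed
  qed
  show "\<forall>(i, j)\<in>TA. guards E (Xb i \<inter> Xb j) (Xsucceq V TA Xb j - Xb i)"
  proof (intro ballI, clarify)
    fix i c assume ic: "(i, c) \<in> TA"
    then have iV: "i \<in> V" and cD: "c \<in> D i" "c \<noteq> i" and Nc: "Nb c \<subseteq> insert i (Nb i)"
      unfolding TA_def by auto
    have cV: "c \<in> V" using cD D_V iV by blast
    have Kc: "D c \<subseteq> D i" "i \<notin> D c" using K[OF iV cD] by auto
    have "D c \<inter> Nb i = {}" using Kc(1) Nb_notD by blast
    then have W: "Xsucceq V TA Xb c - Xb i = D c"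
      using Xsucc[OF cV] Nc Kc(2) unfolding Xb_def by auto
    show "guards E (Xb i \<inter> Xb c) (Xsucceq V TA Xb c - Xb i)"
      unfolding W guards_def
    proof (intro conjI allI impI)
      show "D c \<inter> (Xb i \<inter> Xb c) = {}" using \<open>D c \<inter> Nb i = {}\<close> Kc(2) unfolding Xb_def by auto
    next
      fix a b assume "(a, b) \<in> E" "a \<in> D c"
      then have "b \<in> D c \<or> b \<in> Nb c" using out_D by blast
      then show "b \<in> D c \<union> Xb i \<inter> Xb c" using Nc unfolding Xb_def by auto
    qed
  qed
  show "\<forall>r. is_root V TA r \<longrightarrow> guards E {} (Xsucceq V TA Xb r)"
  proof (intro allI impI)
    fix r assume r: "is_root V TA r"
    then have rV: "r \<in> V" unfolding is_root_def by simp
    have "Xsucceq V TA Xb r = D r" using Xsucc[OF rV] root_Nb[OF r] by simp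
    moreover have "b \<in> D r" if "(a, b) \<in> E" "a \<in> D r" for a b
      using out_D[OF that(2,1)] root_Nb[OF r] by blast
    ultimately show "guards E {} (Xsucceq V TA Xb r)"
      unfolding guards_def by auto
  qed
qed

end



context dg begin

lemma width: assumes v: "v \<in> V" shows "card (Xb v) \<le> circ V E"
proof (cases "Nb v = {}")
  case True
  then show ?thesis using circ_ge1[OF fin EV] unfolding Xb_def by simp
next
  case False
  have Na: "Nb v \<subseteq> set (ap v)" using Nb_anc[OF v] .
  define P where "P i = (i < length (ap v) \<and> ap v ! i \<in> Nb v)" for i
  obtain z0 where "z0 \<in> Nb v" using False by blast
  then obtain k0 where "P k0" using Na unfolding P_def by (metis in_set_conv_nth subsetD)
  define i where "i = (LEAST i. P i)"
  have Pi: "P i" unfolding i_def by (rule LeastI) fact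
  have il: "i < length (ap v)" and ui: "ap v ! i \<in> Nb v" using Pi unfolding P_def by auto
  define u where "u = ap v ! i"
  obtain y where y: "y \<in> D v" "(y, u) \<in> E" using ui unfolding u_def Nb_def by blast
  have vna: "v \<notin> set (ap v)" using okd v by auto
  have "(v, y) \<in> (Ed E (set (ap v)))\<^sup>*" using y(1) unfolding D_def by simp
  from rtrancl_pth[OF this vna] obtain q where q: "pth E q" "q \<noteq> []" "hd q = v" "last q = y"
    "distinct q" "set q \<inter> set (ap v) = {}" by blast
  define cs where "cs = drop i (ap v) @ q"
  have dne: "drop i (ap v) \<noteq> []" using il by simp
  have p: "pth E (take i (ap v) @ (drop i (ap v) @ [v]))" using okd v by (simp add: append_assoc[symmetric])
  then have p2: "pth E (drop i (ap v) @ [v])" using pth_append by blast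
  then have "pth E (drop i (ap v))" "(last (drop i (ap v)), v) \<in> E" using pth_append[of E "drop i (ap v)" "[v]"] dne by auto
  then have pc: "pth E cs" unfolding cs_def using pth_append[of E "drop i (ap v)" q] q by auto
  have dap: "distinct (ap v)" using okd v by auto
  have dc: "distinct cs" unfolding cs_def using q dap set_drop_subset[of i "ap v"] by auto
  have lc: "length cs \<ge> 2" unfolding cs_def using dne q(2) by (cases q) auto
  have lh: "last cs = y" "hd cs = u" unfolding cs_def u_def using q dne il by (auto simp: hd_drop_conv_nth)
  have cyc: "is_dicycle E cs" using pth_cycle[OF pc dc lc] lh y(2) by simp
  have sub: "Xb v \<subseteq> set cs"
  proof
    fix z assume "z \<in> Xb v"
    then consider "z = v" | "z \<in> Nb v" unfolding Xb_def by blast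
    then show "z \<in> set cs"
    proof cases
      case 1 then show ?thesis using q(2,3) unfolding cs_def by (cases q) auto
    next
      case 2
      then obtain k where k: "k < length (ap v)" "z = ap v ! k" using Na by (metis in_set_conv_nth subsetD)
      then have "P k" using 2 unfolding P_def by simp
      then have "i \<le> k" unfolding i_def by (rule Least_le)
      then have "z = drop i (ap v) ! (k - i)" "k - i < length (drop i (ap v))" using k by auto
      then have "z \<in> set (drop i (ap v))" by (metis nth_mem)
      then show ?thesis unfolding cs_def by simp
    qed
  qed
  have "card (Xb v) \<le> card (set cs)" using sub by (simp add: card_mono)
  also have "\<dots> \<le> length cs" by (rule card_length)
  also have "\<dots> \<le> circ V E" using circ_ge[OF fin EV cyc] .
  finally show ?thesis .
qed

end

lemma trancl_map_inj:
  assumes inj: "inj_on h N" and AN: "A \<subseteq> N \<times> N" and a: "a \<in> N" and b: "b \<in> N"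
  shows "(h a, h b) \<in> (map_prod h h ` A)\<^sup>+ \<longleftrightarrow> (a, b) \<in> A\<^sup>+"
proof
  assume "(a, b) \<in> A\<^sup>+"
  then show "(h a, h b) \<in> (map_prod h h ` A)\<^sup>+"
  proof (induction rule: trancl_induct)
    case (base y) then show ?case by (auto intro: r_into_trancl)
  next
    case (step y z)
    then have "(h y, h z) \<in> map_prod h h ` A" by force
    then show ?case using step(3) by (meson trancl_into_trancl)
  qed
next
  have gen: "(x, y) \<in> (map_prod h h ` A)\<^sup>+ \<Longrightarrow> \<forall>a b. x = h a \<longrightarrow> y = h b \<longrightarrow> a \<in> N \<longrightarrow> b \<in> N \<longrightarrow> (a, b) \<in> A\<^sup>+" for x y
  proof (induction rule: trancl_induct)
    case (base y)
    then obtain c d where cd: "(c, d) \<in> A" "x = h c" "y = h d" by auto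
    then have "c \<in> N" "d \<in> N" using AN by auto
    show ?case
    proof (intro allI impI)
      fix a b assume ab: "x = h a" "y = h b" "a \<in> N" "b \<in> N"
      then have "a = c" "b = d" using cd \<open>c \<in> N\<close> \<open>d \<in> N\<close> inj by (auto simp: inj_on_def)
      then show "(a, b) \<in> A\<^sup>+" using cd(1) by auto
    qed
  next
    case (step y z)
    then obtain c d where cd: "(c, d) \<in> A" "y = h c" "z = h d" by auto
    then have cN: "c \<in> N" "d \<in> N" using AN by auto
    show ?case
    proof (intro allI impI)
      fix a b assume ab: "x = h a" "z = h b" "a \<in> N" "b \<in> N"
      have "(a, c) \<in> A\<^sup>+" using step(3) ab cd cN by blast
      moreover have "b = d" using ab cd cN inj by (auto simp: inj_on_def)
      ultimately show "(a, b) \<in> A\<^sup>+" using cd(1) by (meson trancl_into_trancl)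
    qed
  qed
  assume "(h a, h b) \<in> (map_prod h h ` A)\<^sup>+"
  from gen[OF this] show "(a, b) \<in> A\<^sup>+" using a b by blast
qed

lemma transfer:
  assumes dd: "dag_decomposition V E N A X" and inj: "inj_on h N"
  shows "dag_decomposition V E (h ` N) (map_prod h h ` A) (X \<circ> inv_into N h)"
    and "dd_width (h ` N) (X \<circ> inv_into N h) = dd_width N X"
proof -
  note d = dd[unfolded dag_decomposition_def]
  define A' where "A' = map_prod h h ` A"
  define X' where "X' = X \<circ> inv_into N h"
  have AN: "A \<subseteq> N \<times> N" using d by blast
  have X'h: "X' (h i) = X i" if "i \<in> N" for i unfolding X'_def using inv_into_f_f[OF inj that] by simp
  have tr: "(h a, h b) \<in> A'\<^sup>+ \<longleftrightarrow> (a, b) \<in> A\<^sup>+" if "a \<in> N" "b \<in> N" for a b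
    unfolding A'_def using trancl_map_inj[OF inj AN that] .
  have pe: "dpreceq A' (h a) (h b) \<longleftrightarrow> dpreceq A a b" if "a \<in> N" "b \<in> N" for a b
    unfolding dpreceq_def dprec_def using tr[OF that] inj that by (auto simp: inj_on_def)
  have xs: "Xsucceq (h ` N) A' X' (h j) = Xsucceq N A X j" if "j \<in> N" for j
  proof -
    have "Xsucceq (h ` N) A' X' (h j) = (\<Union>k \<in> {k \<in> N. dpreceq A' (h j) (h k)}. X' (h k))"
      unfolding Xsucceq_def by auto
    also have "\<dots> = (\<Union>k \<in> {k \<in> N. dpreceq A j k}. X k)" using pe[OF that] X'h by auto
    finally show ?thesis unfolding Xsucceq_def .
  qed
  have A'N: "A' \<subseteq> h ` N \<times> h ` N" unfolding A'_def using AN by auto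
  have root: "is_root (h ` N) A' (h r) \<longleftrightarrow> is_root N A r" if "r \<in> N" for r
  proof -
    have "(\<exists>i. (i, h r) \<in> A') \<longleftrightarrow> (\<exists>i. (i, r) \<in> A)"
    proof
      assume "\<exists>i. (i, h r) \<in> A'"
      then obtain c d where "(c, d) \<in> A" "h d = h r" unfolding A'_def by auto
      moreover then have "d \<in> N" using AN by auto
      ultimately show "\<exists>i. (i, r) \<in> A" using inj that by (auto simp: inj_on_def)
    next
      assume "\<exists>i. (i, r) \<in> A"
      then show "\<exists>i. (i, h r) \<in> A'" unfolding A'_def by force
    qed
    then show ?thesis unfolding is_root_def using that by auto
  qed
  show "dag_decomposition V E (h ` N) (map_prod h h ` A) (X \<circ> inv_into N h)"
    unfolding A'_def[symmetric] X'_def[symmetric] dag_decomposition_def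
  proof (intro conjI)
    show "finite (h ` N)" using d by simp
    show "A' \<subseteq> h ` N \<times> h ` N" by (rule A'N)
    show "acyclic A'" unfolding acyclic_def
    proof
      fix x show "(x, x) \<notin> A'\<^sup>+"
      proof
        assume xx: "(x, x) \<in> A'\<^sup>+"
        then have "x \<in> h ` N" using A'N trancl_subset_Sigma[OF A'N] by blast
        then obtain a where a: "a \<in> N" "x = h a" by blast
        then have "(a, a) \<in> A\<^sup>+" using tr xx by blast
        then show False using d unfolding acyclic_def by blast
      qed
    qed
    show "\<forall>i\<in>h ` N. X' i \<subseteq> V" using d X'h by auto
    show "(\<Union>i\<in>h ` N. X' i) = V" using d X'h by auto
    show "\<forall>i\<in>h ` N. \<forall>j\<in>h ` N. \<forall>k\<in>h ` N. dpreceq A' i j \<and> dpreceq A' j k \<longrightarrow> X' i \<inter> X' k \<subseteq> X' j"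
      using d X'h pe by auto
    show "\<forall>(i, j)\<in>A'. guards E (X' i \<inter> X' j) (Xsucceq (h ` N) A' X' j - X' i)"
    proof (intro ballI, clarify)
      fix i' j' assume "(i', j') \<in> A'"
      then obtain i j where ij: "(i, j) \<in> A" "i' = h i" "j' = h j" unfolding A'_def by auto
      then have "i \<in> N" "j \<in> N" using AN by auto
      then show "guards E (X' i' \<inter> X' j') (Xsucceq (h ` N) A' X' j' - X' i')"
        using d ij X'h xs by auto
    qed
    show "\<forall>r. is_root (h ` N) A' r \<longrightarrow> guards E {} (Xsucceq (h ` N) A' X' r)"
    proof (intro allI impI)
      fix r' assume r': "is_root (h ` N) A' r'"
      then obtain r where r: "r \<in> N" "r' = h r" unfolding is_root_def by auto
      then show "guards E {} (Xsucceq (h ` N) A' X' r')" using root r' d xs by auto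
    qed
  qed
  have "(\<lambda>i. card (X' i)) ` h ` N = (\<lambda>i. card (X i)) ` N" using X'h by (auto simp: image_iff)
  then show "dd_width (h ` N) (X \<circ> inv_into N h) = dd_width N X"
    unfolding dd_width_def X'_def[symmetric] by simp
qed



theorem mainTheorem2:
  fixes V :: "'a set" and E :: "('a \<times> 'a) set"
  assumes "simple_digraph V E"
  shows "dgw V E \<le> circ V E + 1"
proof -
  have fin: "finite V" and EV: "E \<subseteq> V \<times> V" using assms unfolding simple_digraph_def by auto
  have "\<forall>v\<in>V. \<exists>s\<in>V. (s, v) \<in> (Er E V)\<^sup>*" by blast
  then obtain f ap where ok: "dfs_ok V E f ap" using dfs_exists[OF fin, of V E] by blast
  interpret dg V E f ap using fin EV ok by unfold_locales
  obtain h :: "'a \<Rightarrow> nat" and n where h: "h ` V = {i. i < n}" "inj_on h V"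
    using finite_imp_inj_to_nat_seg[OF fin] by blast
  have dd: "dag_decomposition V E (h ` V) (map_prod h h ` TA) (Xb \<circ> inv_into V h)"
    using transfer(1)[OF decomp h(2)] .
  have ww: "dd_width (h ` V) (Xb \<circ> inv_into V h) = dd_width V Xb"
    using transfer(2)[OF decomp h(2)] .
  have "dd_width V Xb \<le> circ V E"
    unfolding dd_width_def using fin width by (intro Max.boundedI) auto
  moreover have "dgw V E \<le> dd_width V Xb"
    unfolding dgw_def using dd ww by (intro Least_le) blast
  ultimately show ?thesis by simp
qed


end
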